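(* In $\mathsf{RT}(\mathcal{K}_2)$, every intrinsically discrete space is countable: for any object $X$, the topos validates "if the equality relation on $X$ is intrinsically open, then $X$ is countable".
   Context: $\mathsf{RT}(\mathcal{K}_2)$ is the function realizability topos (realizability topos over Kleene's second partial combinatory algebra $\mathcal{K}_2$), with intuitionistic internal language; $\Omega$ is its object of truth values. The Rosolini dominance is $\Sigma = \{p \in \Omega \mid \exists \alpha \in \{0,1\}^{\mathbb{N}}.\, p \Leftrightarrow \exists n\in\mathbb{N}.\, \alpha_n = 1\}$. A subobject is intrinsically open if its characteristic map to $\Omega$ factors through $\Sigma \rightarrowtail \Omega$; $X$ is intrinsically discrete if the equality relation $\{(x,y) \mid x = y\} \subseteq X\times X$ is intrinsically open (equivalently, every singleton is open). A set $X$ is countable if there is a surjection $\mathbb{N} \to X + 1$. *)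

theory Defs
  imports Main "HOL-Library.Countable"
begin

text \<open>Realizability semantics of the function realizability topos RT(K2),
  written out via the standard tripos construction over Kleene's second
  partial combinatory algebra K2 (Baire space with continuous application).\<close>

type_synonym baire = "nat \<Rightarrow> nat"
type_synonym rset = "baire set"

definition K2_code :: "nat list \<Rightarrow> nat" where
  "K2_code = to_nat"

definition K2_defined_at :: "baire \<Rightarrow> baire \<Rightarrow> nat \<Rightarrow> bool" where
  "K2_defined_at f a n \<longleftrightarrow> (\<exists>k. f (K2_code (n # map a [0..<k])) > 0)"

definition K2_app :: "baire \<Rightarrow> baire \<Rightarrow> baire option" where
  "K2_app f a =
     (if \<forall>n. K2_defined_at f a n
      then Some (\<lambda>n. f (K2_code (n # map a [0..<(LEAST k. f (K2_code (n # map a [0..<k])) > 0)])) - 1)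
      else None)"

definition rpair :: "baire \<Rightarrow> baire \<Rightarrow> baire" where
  "rpair a b = (\<lambda>n. if even n then a (n div 2) else b (n div 2))"

definition r_conj :: "rset \<Rightarrow> rset \<Rightarrow> rset" where
  "r_conj P Q = {rpair a b | a b. a \<in> P \<and> b \<in> Q}"

definition r_disj :: "rset \<Rightarrow> rset \<Rightarrow> rset" where
  "r_disj P Q = {rpair t a | t a. (t = (\<lambda>_. 0) \<and> a \<in> P) \<or> (t = (\<lambda>_. 1) \<and> a \<in> Q)}"

definition r_imp :: "rset \<Rightarrow> rset \<Rightarrow> rset" where
  "r_imp P Q = {r. \<forall>a\<in>P. \<exists>b\<in>Q. K2_app r a = Some b}"

definition r_iff :: "rset \<Rightarrow> rset \<Rightarrow> rset" where
  "r_iff P Q = r_conj (r_imp P Q) (r_imp Q P)"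

definition r_all :: "('x \<Rightarrow> rset) \<Rightarrow> rset" where
  "r_all \<Phi> = (\<Inter>x. \<Phi> x)"

definition r_ex :: "('x \<Rightarrow> rset) \<Rightarrow> rset" where
  "r_ex \<Phi> = (\<Union>x. \<Phi> x)"

text \<open>An object of the topos is a carrier (a type) with a realizability-valued
  equality E; quantifiers over an object are relativised to existence E x x.\<close>

definition all_in :: "('x \<Rightarrow> 'x \<Rightarrow> rset) \<Rightarrow> ('x \<Rightarrow> rset) \<Rightarrow> rset" where
  "all_in E \<Phi> = r_all (\<lambda>x. r_imp (E x x) (\<Phi> x))"

definition ex_in :: "('x \<Rightarrow> 'x \<Rightarrow> rset) \<Rightarrow> ('x \<Rightarrow> rset) \<Rightarrow> rset" where
  "ex_in E \<Phi> = r_ex (\<lambda>x. r_conj (E x x) (\<Phi> x))"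

definition is_object :: "('x \<Rightarrow> 'x \<Rightarrow> rset) \<Rightarrow> bool" where
  "is_object E \<longleftrightarrow>
     r_all (\<lambda>x. r_all (\<lambda>y. r_imp (E x y) (E y x))) \<noteq> {} \<and>
     r_all (\<lambda>x. r_all (\<lambda>y. r_all (\<lambda>z. r_imp (r_conj (E x y) (E y z)) (E x z)))) \<noteq> {}"

definition nno_eq :: "nat \<Rightarrow> nat \<Rightarrow> rset" where
  "nno_eq n m = (if n = m then {\<lambda>_. n} else {})"

text \<open>Coproduct X + 1 (None is the added point).\<close>
fun sum_one_eq :: "('x \<Rightarrow> 'x \<Rightarrow> rset) \<Rightarrow> 'x option \<Rightarrow> 'x option \<Rightarrow> rset" where
  "sum_one_eq E (Some x) (Some y) = {rpair (\<lambda>_. 0) r | r. r \<in> E x y}"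
| "sum_one_eq E None None = {rpair (\<lambda>_. 1) r | r. True}"
| "sum_one_eq E _ _ = {}"

definition prod_eq :: "('x \<Rightarrow> 'x \<Rightarrow> rset) \<Rightarrow> ('y \<Rightarrow> 'y \<Rightarrow> rset) \<Rightarrow> 'x \<times> 'y \<Rightarrow> 'x \<times> 'y \<Rightarrow> rset" where
  "prod_eq E1 E2 p q = r_conj (E1 (fst p) (fst q)) (E2 (snd p) (snd q))"

text \<open>Power object: strict extensional predicates.\<close>
definition strict_pred :: "('x \<Rightarrow> 'x \<Rightarrow> rset) \<Rightarrow> ('x \<Rightarrow> rset) \<Rightarrow> rset" where
  "strict_pred E \<phi> = r_all (\<lambda>x. r_imp (\<phi> x) (E x x))"

definition ext_pred :: "('x \<Rightarrow> 'x \<Rightarrow> rset) \<Rightarrow> ('x \<Rightarrow> rset) \<Rightarrow> rset" where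
  "ext_pred E \<phi> = r_all (\<lambda>x. r_all (\<lambda>y. r_imp (r_conj (\<phi> x) (E x y)) (\<phi> y)))"

definition pow_eq :: "('x \<Rightarrow> 'x \<Rightarrow> rset) \<Rightarrow> ('x \<Rightarrow> rset) \<Rightarrow> ('x \<Rightarrow> rset) \<Rightarrow> rset" where
  "pow_eq E \<phi> \<psi> = r_conj (r_conj (strict_pred E \<phi>) (ext_pred E \<phi>)) (r_all (\<lambda>x. r_iff (\<phi> x) (\<psi> x)))"

definition is_fun_rel :: "('x \<Rightarrow> 'x \<Rightarrow> rset) \<Rightarrow> ('y \<Rightarrow> 'y \<Rightarrow> rset) \<Rightarrow> ('x \<times> 'y \<Rightarrow> rset) \<Rightarrow> rset" where
  "is_fun_rel EA EB F =
     r_conj (all_in EA (\<lambda>a. ex_in EB (\<lambda>b. F (a, b))))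
            (all_in EA (\<lambda>a. all_in EB (\<lambda>b. all_in EB (\<lambda>b'.
                r_imp (r_conj (F (a, b)) (F (a, b'))) (EB b b')))))"

definition is_surj_rel :: "('x \<Rightarrow> 'x \<Rightarrow> rset) \<Rightarrow> ('y \<Rightarrow> 'y \<Rightarrow> rset) \<Rightarrow> ('x \<times> 'y \<Rightarrow> rset) \<Rightarrow> rset" where
  "is_surj_rel EA EB F = all_in EB (\<lambda>b. ex_in EA (\<lambda>a. F (a, b)))"

definition is_binseq :: "(nat \<times> nat \<Rightarrow> rset) \<Rightarrow> rset" where
  "is_binseq G = r_conj (is_fun_rel nno_eq nno_eq G)
     (all_in nno_eq (\<lambda>n. all_in nno_eq (\<lambda>m.
        r_imp (G (n, m)) (r_disj (nno_eq m 0) (nno_eq m 1)))))"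

text \<open>"The equality on X is intrinsically open":
  forall x y in X. [x = y] \<in> \<Sigma>, i.e. exists alpha in {0,1}^N with
  (x = y) <-> (exists n. alpha_n = 1).\<close>
definition eq_intrinsically_open :: "('x \<Rightarrow> 'x \<Rightarrow> rset) \<Rightarrow> rset" where
  "eq_intrinsically_open E =
     all_in E (\<lambda>x. all_in E (\<lambda>y.
       ex_in (pow_eq (prod_eq nno_eq nno_eq)) (\<lambda>G.
         r_conj (is_binseq G) (r_iff (E x y) (ex_in nno_eq (\<lambda>n. G (n, 1)))))))"

text \<open>"X is countable": there is a surjection N \<rightarrow> X + 1.\<close>
definition countable_obj :: "('x \<Rightarrow> 'x \<Rightarrow> rset) \<Rightarrow> rset" where
  "countable_obj E =
     ex_in (pow_eq (prod_eq nno_eq (sum_one_eq E))) (\<lambda>F.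
       r_conj (is_fun_rel nno_eq (sum_one_eq E) F) (is_surj_rel nno_eq (sum_one_eq E) F))"

definition valid :: "rset \<Rightarrow> bool" where
  "valid P \<longleftrightarrow> P \<noteq> {}"

end

theory Submission
  imports Defs
begin



definition lft :: "baire \<Rightarrow> baire" where "lft c = (\<lambda>n. c (2*n))"
definition rgt :: "baire \<Rightarrow> baire" where "rgt c = (\<lambda>n. c (2*n+1))"
definition agree :: "nat \<Rightarrow> baire \<Rightarrow> baire \<Rightarrow> bool" where "agree k a b \<longleftrightarrow> (\<forall>i<k. a i = b i)"

lemma lft_rpair[simp]: "lft (rpair a b) = a" by (simp add: lft_def rpair_def)
lemma rgt_rpair[simp]: "rgt (rpair a b) = b" by (simp add: rgt_def rpair_def)
lemma rpair0[simp]: "rpair a b 0 = a 0" by (simp add: rpair_def)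
lemma rpair_lr[simp]: "rpair (lft c) (rgt c) = c"
  unfolding rpair_def lft_def rgt_def
  by (rule ext) (metis dvd_mult_div_cancel odd_two_times_div_two_succ)
lemma rpair_inj[simp]: "rpair a b = rpair a' b' \<longleftrightarrow> a = a' \<and> b = b'"
  by (metis lft_rpair rgt_rpair)

lemma agree_map: "agree k a b \<longleftrightarrow> map a [0..<k] = map b [0..<k]"
  unfolding agree_def map_eq_conv by (simp add: Ball_def)

lemma agree_mono: "agree k a b \<Longrightarrow> j \<le> k \<Longrightarrow> agree j a b"
  unfolding agree_def by auto
lemma agree_sym: "agree k a b \<Longrightarrow> agree k b a" unfolding agree_def by auto
lemma agree_trans: "agree k a b \<Longrightarrow> agree k b c \<Longrightarrow> agree k a c" unfolding agree_def by auto

definition cont_on :: "baire set \<Rightarrow> (baire \<Rightarrow> baire) \<Rightarrow> bool" where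
  "cont_on D \<phi> \<longleftrightarrow> (\<forall>a\<in>D. \<forall>n. \<exists>k. \<forall>a'\<in>D. agree k a' a \<longrightarrow> \<phi> a' n = \<phi> a n)"

definition lc_on :: "baire set \<Rightarrow> (baire \<Rightarrow> 'b) \<Rightarrow> bool" where
  "lc_on D N \<longleftrightarrow> (\<forall>a\<in>D. \<exists>k. \<forall>a'\<in>D. agree k a' a \<longrightarrow> N a' = N a)"

section \<open>Representation\<close>

definition good_at :: "baire set \<Rightarrow> (baire \<Rightarrow> baire) \<Rightarrow> nat \<Rightarrow> nat list \<Rightarrow> baire \<Rightarrow> bool" where
  "good_at D \<phi> n l a \<longleftrightarrow> a \<in> D \<and> map a [0..<length l] = l \<and> (\<forall>a'\<in>D. agree (length l) a' a \<longrightarrow> \<phi> a' n = \<phi> a n)"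

fun repg :: "baire set \<Rightarrow> (baire \<Rightarrow> baire) \<Rightarrow> nat list \<Rightarrow> nat" where
  "repg D \<phi> [] = 0"
| "repg D \<phi> (n # l) = (if \<exists>a. good_at D \<phi> n l a then Suc (\<phi> (SOME a. good_at D \<phi> n l a) n) else 0)"

definition rep_code :: "baire set \<Rightarrow> (baire \<Rightarrow> baire) \<Rightarrow> baire" where
  "rep_code D \<phi> = (\<lambda>m. repg D \<phi> (from_nat m))"

lemma rep_code_K2[simp]: "rep_code D \<phi> (K2_code xs) = repg D \<phi> xs"
  by (simp add: rep_code_def K2_code_def)

lemma rep_value:
  assumes "a \<in> D" "good_at D \<phi> n (map a [0..<k]) b"
  shows "\<phi> b n = \<phi> a n"
proof -
  from assms(2) have "b \<in> D" "map b [0..<k] = map a [0..<k]" "\<forall>a'\<in>D. agree k a' b \<longrightarrow> \<phi> a' n = \<phi> b n"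
    unfolding good_at_def by auto
  moreover then have "agree k a b" unfolding agree_map by simp
  ultimately show ?thesis using assms(1) by auto
qed

lemma rep_correct:
  assumes c: "cont_on D \<phi>" and a: "a \<in> D"
  shows "K2_app (rep_code D \<phi>) a = Some (\<phi> a)"
proof -
  have ex: "\<exists>k. rep_code D \<phi> (K2_code (n # map a [0..<k])) > 0" for n
  proof -
    obtain k where k: "\<forall>a'\<in>D. agree k a' a \<longrightarrow> \<phi> a' n = \<phi> a n"
      using c a unfolding cont_on_def by blast
    have "good_at D \<phi> n (map a [0..<k]) a" using a k unfolding good_at_def by simp
    then show ?thesis by (intro exI[of _ k]) auto
  qed
  have val: "rep_code D \<phi> (K2_code (n # map a [0..<k])) - 1 = \<phi> a n"
    if "rep_code D \<phi> (K2_code (n # map a [0..<k])) > 0" for n k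
  proof -
    from that have g: "\<exists>b. good_at D \<phi> n (map a [0..<k]) b" by (auto split: if_splits)
    then have "good_at D \<phi> n (map a [0..<k]) (SOME b. good_at D \<phi> n (map a [0..<k]) b)"
      by (rule someI_ex)
    from rep_value[OF a this] g show ?thesis by simp
  qed
  let ?f = "rep_code D \<phi>"
  have "\<forall>n. K2_defined_at ?f a n"
    using ex unfolding K2_defined_at_def by blast
  then have "K2_app ?f a = Some (\<lambda>n. ?f (K2_code (n # map a [0..<(LEAST k. ?f (K2_code (n # map a [0..<k])) > 0)])) - 1)"
    unfolding K2_app_def by (rule if_P)
  also have "(\<lambda>n. ?f (K2_code (n # map a [0..<(LEAST k. ?f (K2_code (n # map a [0..<k])) > 0)])) - 1) = \<phi> a"
  proof (rule ext)
    fix n show "?f (K2_code (n # map a [0..<(LEAST k. ?f (K2_code (n # map a [0..<k])) > 0)])) - 1 = \<phi> a n"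
      by (rule val, rule LeastI_ex[OF ex])
  qed
  finally show ?thesis .
qed

lemma rep_exists: "cont_on D \<phi> \<Longrightarrow> \<exists>f. \<forall>a\<in>D. K2_app f a = Some (\<phi> a)"
  using rep_correct by blast

section \<open>Continuity of application\<close>

lemma app_cont:
  assumes "K2_app f a = Some b"
  shows "\<exists>K. \<forall>f' a' b'. agree K f' f \<longrightarrow> agree K a' a \<longrightarrow> K2_app f' a' = Some b' \<longrightarrow> b' n = b n"
proof -
  let ?c = "\<lambda>f a k. f (K2_code (n # map a [0..<k]))"
  have def: "\<forall>n. K2_defined_at f a n" and bd: "b n = ?c f a (LEAST k. ?c f a k > 0) - 1"
    using assms unfolding K2_app_def by (auto split: if_splits)
  from def have ex: "\<exists>k. ?c f a k > 0" unfolding K2_defined_at_def by blast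
  define k0 where "k0 = (LEAST k. ?c f a k > 0)"
  have pos: "?c f a k0 > 0" unfolding k0_def using LeastI_ex[OF ex] .
  have zero: "\<not> ?c f a j > 0" if "j < k0" for j using not_less_Least[OF that[unfolded k0_def]] .
  define M where "M = Suc (Max ((\<lambda>j. K2_code (n # map a [0..<j])) ` {..k0}))"
  have Mb: "K2_code (n # map a [0..<j]) < M" if "j \<le> k0" for j
    unfolding M_def using that by (simp add: le_imp_less_Suc)
  show ?thesis
  proof (intro exI[of _ "max M k0"] allI impI)
    fix f' a' b'
    assume af: "agree (max M k0) f' f" and aa: "agree (max M k0) a' a" and ap: "K2_app f' a' = Some b'"
    have same: "?c f' a' j = ?c f a j" if "j \<le> k0" for j
    proof -
      have "map a' [0..<j] = map a [0..<j]"
      proof -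
        have "agree j a' a" using agree_mono[OF aa, of j] that by simp
        then show ?thesis unfolding agree_map .
      qed
      moreover have "f' (K2_code (n # map a [0..<j])) = f (K2_code (n # map a [0..<j]))"
        using af Mb[OF that] unfolding agree_def by simp
      ultimately show ?thesis by (simp only:)
    qed
    have L: "(LEAST k. ?c f' a' k > 0) = k0"
    proof (rule Least_equality)
      show "?c f' a' k0 > 0" using same pos by simp
      show "k0 \<le> k" if "?c f' a' k > 0" for k
        using that same zero by (metis less_imp_le_nat not_le_imp_less)
    qed
    have "b' n = ?c f' a' (LEAST k. ?c f' a' k > 0) - 1"
      using ap unfolding K2_app_def by (auto split: if_splits)
    then show "b' n = b n" using L bd same[of k0] k0_def by simp
  qed
qed




lemma cont_subset: "cont_on D \<phi> \<Longrightarrow> D' \<subseteq> D \<Longrightarrow> cont_on D' \<phi>"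
  unfolding cont_on_def by blast

lemma cont_cong: "(\<And>a. a \<in> D \<Longrightarrow> \<phi> a = \<psi> a) \<Longrightarrow> cont_on D \<phi> \<Longrightarrow> cont_on D \<psi>"
  unfolding cont_on_def by simp

lemma cont_const[simp]: "cont_on D (\<lambda>_. b)"
  unfolding cont_on_def by auto

lemma cont_id[simp]: "cont_on D (\<lambda>a. a)"
  unfolding cont_on_def agree_def by (intro ballI allI exI[of _ "Suc _"]) auto

lemma cont_lft: "cont_on D \<phi> \<Longrightarrow> cont_on D (\<lambda>a. lft (\<phi> a))"
  unfolding cont_on_def lft_def by blast

lemma cont_rgt: "cont_on D \<phi> \<Longrightarrow> cont_on D (\<lambda>a. rgt (\<phi> a))"
  unfolding cont_on_def rgt_def by blast

lemma cont_rpair: "cont_on D \<phi> \<Longrightarrow> cont_on D \<psi> \<Longrightarrow> cont_on D (\<lambda>a. rpair (\<phi> a) (\<psi> a))"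
  unfolding cont_on_def
proof (intro ballI allI)
  fix a n assume "\<forall>a\<in>D. \<forall>n. \<exists>k. \<forall>a'\<in>D. agree k a' a \<longrightarrow> \<phi> a' n = \<phi> a n"
    "\<forall>a\<in>D. \<forall>n. \<exists>k. \<forall>a'\<in>D. agree k a' a \<longrightarrow> \<psi> a' n = \<psi> a n" "a \<in> D"
  then obtain k1 k2 where k1: "\<forall>a'\<in>D. agree k1 a' a \<longrightarrow> \<phi> a' (n div 2) = \<phi> a (n div 2)"
    and k2: "\<forall>a'\<in>D. agree k2 a' a \<longrightarrow> \<psi> a' (n div 2) = \<psi> a (n div 2)" by blast
  show "\<exists>k. \<forall>a'\<in>D. agree k a' a \<longrightarrow> rpair (\<phi> a') (\<psi> a') n = rpair (\<phi> a) (\<psi> a) n"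
  proof (intro exI[of _ "max k1 k2"] ballI impI)
    fix a' assume a': "a' \<in> D" "agree (max k1 k2) a' a"
    then have "agree k1 a' a" "agree k2 a' a" using agree_mono by auto
    then show "rpair (\<phi> a') (\<psi> a') n = rpair (\<phi> a) (\<psi> a) n" using k1 k2 a' by (simp add: rpair_def)
  qed
qed

lemma cont_constfun: "lc_on D N \<Longrightarrow> cont_on D (\<lambda>a. \<lambda>_. N a)"
  unfolding cont_on_def lc_on_def by fast

lemma lc_entry: "cont_on D \<phi> \<Longrightarrow> lc_on D (\<lambda>a. \<phi> a i)"
  unfolding cont_on_def lc_on_def by blast

lemma lc_comp: "lc_on D N \<Longrightarrow> lc_on D (\<lambda>a. g (N a))"
  unfolding lc_on_def
proof (intro ballI)
  fix a assume "\<forall>a\<in>D. \<exists>k. \<forall>a'\<in>D. agree k a' a \<longrightarrow> N a' = N a" "a \<in> D"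
  then obtain k where "\<forall>a'\<in>D. agree k a' a \<longrightarrow> N a' = N a" by blast
  then show "\<exists>k. \<forall>a'\<in>D. agree k a' a \<longrightarrow> g (N a') = g (N a)" by (intro exI[of _ k]) simp
qed

lemma lc_subset: "lc_on D N \<Longrightarrow> D' \<subseteq> D \<Longrightarrow> lc_on D' N"
  unfolding lc_on_def by blast

lemma agree_le_mono: "agree k a b \<Longrightarrow> k' \<le> k \<Longrightarrow> agree k' a b"
  by (rule agree_mono)

lemma cont_agree:
  assumes c: "cont_on D \<phi>" and a: "a \<in> D"
  shows "\<exists>k. \<forall>a'\<in>D. agree k a' a \<longrightarrow> agree K (\<phi> a') (\<phi> a)"
proof (induction K)
  case 0 then show ?case by (simp add: agree_def)
next
  case (Suc K)
  then obtain k1 where k1: "\<forall>a'\<in>D. agree k1 a' a \<longrightarrow> agree K (\<phi> a') (\<phi> a)" by blast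
  obtain k2 where k2: "\<forall>a'\<in>D. agree k2 a' a \<longrightarrow> \<phi> a' K = \<phi> a K"
    using c a unfolding cont_on_def by blast
  show ?case
  proof (intro exI[of _ "max k1 k2"] ballI impI)
    fix a' assume "a' \<in> D" "agree (max k1 k2) a' a"
    then have "agree K (\<phi> a') (\<phi> a)" "\<phi> a' K = \<phi> a K"
      using k1 k2 agree_mono[of "max k1 k2" a' a] by auto
    then show "agree (Suc K) (\<phi> a') (\<phi> a)" unfolding agree_def using less_Suc_eq by auto
  qed
qed

lemma cont_app:
  assumes c1: "cont_on D \<phi>" and c2: "cont_on D \<psi>"
    and def: "\<And>a. a \<in> D \<Longrightarrow> K2_app (\<phi> a) (\<psi> a) \<noteq> None"
  shows "cont_on D (\<lambda>a. the (K2_app (\<phi> a) (\<psi> a)))"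
  unfolding cont_on_def
proof (intro ballI allI)
  fix a n assume a: "a \<in> D"
  obtain b where b: "K2_app (\<phi> a) (\<psi> a) = Some b" using def[OF a] by blast
  obtain K where K: "\<forall>f' a' b'. agree K f' (\<phi> a) \<longrightarrow> agree K a' (\<psi> a) \<longrightarrow> K2_app f' a' = Some b' \<longrightarrow> b' n = b n"
    using app_cont[OF b] by blast
  obtain k1 where k1: "\<forall>a'\<in>D. agree k1 a' a \<longrightarrow> agree K (\<phi> a') (\<phi> a)" using cont_agree[OF c1 a] by blast
  obtain k2 where k2: "\<forall>a'\<in>D. agree k2 a' a \<longrightarrow> agree K (\<psi> a') (\<psi> a)" using cont_agree[OF c2 a] by blast
  show "\<exists>k. \<forall>a'\<in>D. agree k a' a \<longrightarrow> the (K2_app (\<phi> a') (\<psi> a')) n = the (K2_app (\<phi> a) (\<psi> a)) n"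
  proof (intro exI[of _ "max k1 k2"] ballI impI)
    fix a' assume a': "a' \<in> D" "agree (max k1 k2) a' a"
    then have "agree K (\<phi> a') (\<phi> a)" "agree K (\<psi> a') (\<psi> a)"
      using k1 k2 agree_mono[of "max k1 k2" a' a] by auto
    moreover obtain b' where b': "K2_app (\<phi> a') (\<psi> a') = Some b'" using def[OF a'(1)] by blast
    ultimately have "b' n = b n" using K by blast
    then show "the (K2_app (\<phi> a') (\<psi> a')) n = the (K2_app (\<phi> a) (\<psi> a)) n"
      using b b' by simp
  qed
qed

lemma cont_local:
  assumes "\<And>a. a \<in> D \<Longrightarrow> \<exists>k. cont_on {a'\<in>D. agree k a' a} \<phi>"
  shows "cont_on D \<phi>"
  unfolding cont_on_def
proof (intro ballI allI)
  fix a n assume a: "a \<in> D"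
  obtain k where k: "cont_on {a'\<in>D. agree k a' a} \<phi>" using assms[OF a] by blast
  have "a \<in> {a'\<in>D. agree k a' a}" using a by (simp add: agree_def)
  then obtain k' where k': "\<forall>a'\<in>{a'\<in>D. agree k a' a}. agree k' a' a \<longrightarrow> \<phi> a' n = \<phi> a n"
    using k unfolding cont_on_def by blast
  show "\<exists>k. \<forall>a'\<in>D. agree k a' a \<longrightarrow> \<phi> a' n = \<phi> a n"
  proof (intro exI[of _ "max k k'"] ballI impI)
    fix a' assume a': "a' \<in> D" "agree (max k k') a' a"
    then have "agree k a' a" "agree k' a' a" using agree_mono by auto
    then show "\<phi> a' n = \<phi> a n" using k' a' by auto
  qed
qed

lemma cont_if:
  assumes lc: "lc_on D C" and c1: "cont_on {a\<in>D. C a} \<phi>" and c2: "cont_on {a\<in>D. \<not> C a} \<psi>"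
  shows "cont_on D (\<lambda>a. if C a then \<phi> a else \<psi> a)"
proof (rule cont_local)
  fix a assume a: "a \<in> D"
  obtain k where k: "\<forall>a'\<in>D. agree k a' a \<longrightarrow> C a' = C a" using lc a unfolding lc_on_def by blast
  show "\<exists>k. cont_on {a'\<in>D. agree k a' a} (\<lambda>a. if C a then \<phi> a else \<psi> a)"
  proof (cases "C a")
    case True
    have "cont_on {a'\<in>D. agree k a' a} \<phi>" by (rule cont_subset[OF c1]) (use k True in auto)
    then show ?thesis by (intro exI[of _ k]) (rule cont_cong[rotated], auto simp: k True)
  next
    case False
    have "cont_on {a'\<in>D. agree k a' a} \<psi>" by (rule cont_subset[OF c2]) (use k False in auto)
    then show ?thesis by (intro exI[of _ k]) (rule cont_cong[rotated], auto simp: k False)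
  qed
qed

lemma cont_discrete: "cont_on (range (\<lambda>n::nat. \<lambda>_::nat. n)) \<phi>"
  unfolding cont_on_def
proof (intro ballI allI exI[of _ 1] impI)
  fix a n a' assume "a \<in> range (\<lambda>n::nat. \<lambda>_::nat. n)" "a' \<in> range (\<lambda>n::nat. \<lambda>_::nat. n)" "agree 1 a' a"
  then have "a' = a" unfolding agree_def by auto
  then show "\<phi> a' n = \<phi> a n" by simp
qed

definition Kc :: "baire \<Rightarrow> baire" where "Kc b = rep_code UNIV (\<lambda>_. b)"
lemma Kc[simp]: "K2_app (Kc b) a = Some b"
  unfolding Kc_def by (rule rep_correct) auto




lemma mem_conj: "c \<in> r_conj P Q \<longleftrightarrow> lft c \<in> P \<and> rgt c \<in> Q"
proof
  assume "c \<in> r_conj P Q" then show "lft c \<in> P \<and> rgt c \<in> Q" unfolding r_conj_def by auto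
next
  assume "lft c \<in> P \<and> rgt c \<in> Q"
  then show "c \<in> r_conj P Q" unfolding r_conj_def by (intro CollectI exI[of _ "lft c"] exI[of _ "rgt c"]) simp
qed

lemma mem_imp: "r \<in> r_imp P Q \<longleftrightarrow> (\<forall>a\<in>P. \<exists>b\<in>Q. K2_app r a = Some b)"
  unfolding r_imp_def by simp

lemma mem_all_in: "f \<in> all_in E \<Phi> \<longleftrightarrow> (\<forall>x. \<forall>r\<in>E x x. \<exists>b\<in>\<Phi> x. K2_app f r = Some b)"
  unfolding all_in_def r_all_def r_imp_def by simp

lemma all_inD: "f \<in> all_in E \<Phi> \<Longrightarrow> r \<in> E x x \<Longrightarrow> \<exists>b. K2_app f r = Some b \<and> b \<in> \<Phi> x"
  unfolding mem_all_in by blast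

lemma impD: "f \<in> r_imp P Q \<Longrightarrow> a \<in> P \<Longrightarrow> \<exists>b. K2_app f a = Some b \<and> b \<in> Q"
  unfolding mem_imp by blast

lemma mem_ex_in: "c \<in> ex_in E \<Phi> \<longleftrightarrow> (\<exists>x. lft c \<in> E x x \<and> rgt c \<in> \<Phi> x)"
  unfolding ex_in_def r_ex_def by (simp add: mem_conj)

lemma mem_nno[simp]: "e \<in> nno_eq n m \<longleftrightarrow> n = m \<and> e = (\<lambda>_. n)"
  unfolding nno_eq_def by auto

lemma mem_iff: "c \<in> r_iff P Q \<longleftrightarrow> lft c \<in> r_imp P Q \<and> rgt c \<in> r_imp Q P"
  unfolding r_iff_def by (rule mem_conj)

lemma const_eq: "(\<lambda>_::nat. m) = (\<lambda>_. n) \<longleftrightarrow> m = (n::nat)"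
  by (metis)

locale Setting =
  fixes E :: "'a \<Rightarrow> 'a \<Rightarrow> baire set" and a0 :: baire
  assumes obj: "is_object E" and a0: "a0 \<in> eq_intrinsically_open E"
begin

definition B1 where "B1 r = the (K2_app a0 r)"
definition B where "B r s = the (K2_app (B1 r) s)"

definition tot :: "baire \<Rightarrow> baire" where "tot c = lft (lft (lft (rgt c)))"
definition uq :: "baire \<Rightarrow> baire" where "uq c = rgt (lft (lft (rgt c)))"
definition i1 :: "baire \<Rightarrow> baire" where "i1 c = lft (rgt (rgt c))"
definition i2 :: "baire \<Rightarrow> baire" where "i2 c = rgt (rgt (rgt c))"

lemma B_ok:
  assumes "r \<in> E x x" "s \<in> E y y"
  shows "K2_app a0 r = Some (B1 r) \<and> K2_app (B1 r) s = Some (B r s) \<and>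
    (\<exists>G. rgt (B r s) \<in> r_conj (is_binseq G) (r_iff (E x y) (ex_in nno_eq (\<lambda>n. G (n, 1)))))"
proof -
  obtain b1 where b1: "K2_app a0 r = Some b1"
    and b1m: "b1 \<in> all_in E (\<lambda>y. ex_in (pow_eq (prod_eq nno_eq nno_eq)) (\<lambda>G.
         r_conj (is_binseq G) (r_iff (E x y) (ex_in nno_eq (\<lambda>n. G (n, 1))))))"
    using all_inD[OF a0[unfolded eq_intrinsically_open_def] assms(1)] by blast
  obtain b2 where b2: "K2_app b1 s = Some b2"
    and b2m: "b2 \<in> ex_in (pow_eq (prod_eq nno_eq nno_eq)) (\<lambda>G.
         r_conj (is_binseq G) (r_iff (E x y) (ex_in nno_eq (\<lambda>n. G (n, 1)))))"
    using all_inD[OF b1m assms(2)] by blast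
  have "B1 r = b1" using b1 by (simp add: B1_def)
  moreover have "B r s = b2" using b2 \<open>B1 r = b1\<close> by (simp add: B_def)
  ultimately show ?thesis using b1 b2 b2m unfolding mem_ex_in by auto
qed

lemma Gfacts:
  assumes "r \<in> E x x" "s \<in> E y y"
  shows "\<exists>G.
   (\<forall>n. \<exists>m g. K2_app (tot (B r s)) (\<lambda>_. n) = Some (rpair (\<lambda>_. m) g) \<and> g \<in> G (n, m))
   \<and> (\<forall>n m m' g g'. g \<in> G (n, m) \<longrightarrow> g' \<in> G (n, m') \<longrightarrow> m = m')
   \<and> (\<forall>e\<in>E x y. \<exists>n g. K2_app (i1 (B r s)) e = Some (rpair (\<lambda>_. n) g) \<and> g \<in> G (n, 1))
   \<and> (\<forall>n g. g \<in> G (n, 1) \<longrightarrow> (\<exists>w\<in>E x y. K2_app (i2 (B r s)) (rpair (\<lambda>_. n) g) = Some w))"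
proof -
  obtain G where G: "rgt (B r s) \<in> r_conj (is_binseq G) (r_iff (E x y) (ex_in nno_eq (\<lambda>n. G (n, 1))))"
    using B_ok[OF assms] by blast
  let ?c = "rgt (B r s)"
  have tm: "tot (B r s) \<in> all_in nno_eq (\<lambda>a. ex_in nno_eq (\<lambda>b. G (a, b)))"
    and um: "uq (B r s) \<in> all_in nno_eq (\<lambda>a. all_in nno_eq (\<lambda>b. all_in nno_eq (\<lambda>b'.
                r_imp (r_conj (G (a, b)) (G (a, b'))) (nno_eq b b'))))"
    and im1: "i1 (B r s) \<in> r_imp (E x y) (ex_in nno_eq (\<lambda>n. G (n, 1)))"
    and im2: "i2 (B r s) \<in> r_imp (ex_in nno_eq (\<lambda>n. G (n, 1))) (E x y)"
    using G unfolding mem_conj is_binseq_def is_fun_rel_def mem_iff tot_def uq_def i1_def i2_def by auto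
  have T: "\<exists>m g. K2_app (tot (B r s)) (\<lambda>_. n) = Some (rpair (\<lambda>_. m) g) \<and> g \<in> G (n, m)" for n
  proof -
    obtain v where "K2_app (tot (B r s)) (\<lambda>_. n) = Some v" "v \<in> ex_in nno_eq (\<lambda>b. G (n, b))"
      using all_inD[OF tm, of "\<lambda>_. n" n] by auto
    then obtain m where "K2_app (tot (B r s)) (\<lambda>_. n) = Some v" "lft v = (\<lambda>_. m)" "rgt v \<in> G (n, m)"
      unfolding mem_ex_in by auto
    then show ?thesis by (metis rpair_lr)
  qed
  have U: "m = m'" if "g \<in> G (n, m)" "g' \<in> G (n, m')" for n m m' g g'
  proof -
    obtain u1 where u1: "u1 \<in> all_in nno_eq (\<lambda>b. all_in nno_eq (\<lambda>b'.
                r_imp (r_conj (G (n, b)) (G (n, b'))) (nno_eq b b')))"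
      using all_inD[OF um, of "\<lambda>_. n" n] by auto
    obtain u2 where u2: "u2 \<in> all_in nno_eq (\<lambda>b'. r_imp (r_conj (G (n, m)) (G (n, b'))) (nno_eq m b'))"
      using all_inD[OF u1, of "\<lambda>_. m" m] by auto
    obtain u3 where u3: "u3 \<in> r_imp (r_conj (G (n, m)) (G (n, m'))) (nno_eq m m')"
      using all_inD[OF u2, of "\<lambda>_. m'" m'] by auto
    have "rpair g g' \<in> r_conj (G (n, m)) (G (n, m'))" using that by (simp add: mem_conj)
    then show ?thesis using impD[OF u3] by auto
  qed
  have I1: "\<exists>n g. K2_app (i1 (B r s)) e = Some (rpair (\<lambda>_. n) g) \<and> g \<in> G (n, 1)" if e: "e \<in> E x y" for e
  proof -
    obtain v where "K2_app (i1 (B r s)) e = Some v" "v \<in> ex_in nno_eq (\<lambda>n. G (n, 1))"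
      using impD[OF im1 e] by blast
    then obtain n where "K2_app (i1 (B r s)) e = Some v" "lft v = (\<lambda>_. n)" "rgt v \<in> G (n, 1)"
      unfolding mem_ex_in by auto
    then show ?thesis by (metis rpair_lr)
  qed
  have I2: "\<exists>w\<in>E x y. K2_app (i2 (B r s)) (rpair (\<lambda>_. n) g) = Some w" if "g \<in> G (n, 1)" for n g
  proof -
    have "rpair (\<lambda>_. n) g \<in> ex_in nno_eq (\<lambda>n. G (n, 1))" using that unfolding mem_ex_in by auto
    then show ?thesis using impD[OF im2] by blast
  qed
  show ?thesis using T U I1 I2 by blast
qed

end



lemma cont_comp:
  assumes c1: "cont_on D' \<phi>" and c2: "cont_on D \<psi>" and im: "\<And>a. a \<in> D \<Longrightarrow> \<psi> a \<in> D'"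
  shows "cont_on D (\<lambda>a. \<phi> (\<psi> a))"
  unfolding cont_on_def
proof (intro ballI allI)
  fix a n assume a: "a \<in> D"
  obtain K where K: "\<forall>b'\<in>D'. agree K b' (\<psi> a) \<longrightarrow> \<phi> b' n = \<phi> (\<psi> a) n"
    using c1 im[OF a] unfolding cont_on_def by blast
  obtain k where k: "\<forall>a'\<in>D. agree k a' a \<longrightarrow> agree K (\<psi> a') (\<psi> a)" using cont_agree[OF c2 a] by blast
  show "\<exists>k. \<forall>a'\<in>D. agree k a' a \<longrightarrow> \<phi> (\<psi> a') n = \<phi> (\<psi> a) n"
    using K k im by blast
qed

lemma lc_comp_cont:
  assumes c1: "lc_on D' N" and c2: "cont_on D \<psi>" and im: "\<And>a. a \<in> D \<Longrightarrow> \<psi> a \<in> D'"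
  shows "lc_on D (\<lambda>a. N (\<psi> a))"
  unfolding lc_on_def
proof (intro ballI)
  fix a assume a: "a \<in> D"
  obtain K where K: "\<forall>b'\<in>D'. agree K b' (\<psi> a) \<longrightarrow> N b' = N (\<psi> a)"
    using c1 im[OF a] unfolding lc_on_def by blast
  obtain k where k: "\<forall>a'\<in>D. agree k a' a \<longrightarrow> agree K (\<psi> a') (\<psi> a)" using cont_agree[OF c2 a] by blast
  show "\<exists>k. \<forall>a'\<in>D. agree k a' a \<longrightarrow> N (\<psi> a') = N (\<psi> a)"
    using K k im by blast
qed

context Setting
begin

definition D0 where "D0 = {r. \<exists>x. r \<in> E x x}"
definition nr where "nr r = the (K2_app (i1 (B r r)) r) 0"
definition V where "V r s = the (K2_app (tot (B r s)) (\<lambda>_. nr r))"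
definition W where "W r s = the (K2_app (i2 (B r s)) (rpair (\<lambda>_. nr r) (rgt (V r s))))"

lemma V1: assumes "r \<in> E x x" shows "V r r 0 = 1"
proof -
  obtain G where
    T: "\<forall>n. \<exists>m g. K2_app (tot (B r r)) (\<lambda>_. n) = Some (rpair (\<lambda>_. m) g) \<and> g \<in> G (n, m)"
    and U: "\<forall>n m m' g g'. g \<in> G (n, m) \<longrightarrow> g' \<in> G (n, m') \<longrightarrow> m = m'"
    and I1: "\<forall>e\<in>E x x. \<exists>n g. K2_app (i1 (B r r)) e = Some (rpair (\<lambda>_. n) g) \<and> g \<in> G (n, 1)"
    using Gfacts[OF assms assms] by blast
  obtain n g where ng: "K2_app (i1 (B r r)) r = Some (rpair (\<lambda>_. n) g)" "g \<in> G (n, 1)"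
    using I1 assms by blast
  have "nr r = n" unfolding nr_def using ng by simp
  obtain m g' where mg: "K2_app (tot (B r r)) (\<lambda>_. n) = Some (rpair (\<lambda>_. m) g')" "g' \<in> G (n, m)"
    using T by blast
  have "m = 1" using U ng(2) mg(2) by metis
  then show ?thesis unfolding V_def using \<open>nr r = n\<close> mg(1) by simp
qed

lemma B_cont: assumes "r \<in> D0" shows "cont_on D0 (B r)"
proof -
  have "cont_on D0 (\<lambda>s. the (K2_app ((\<lambda>_. B1 r) s) s))"
  proof (rule cont_app)
    fix s assume "s \<in> D0"
    then show "K2_app ((\<lambda>_. B1 r) s) s \<noteq> None" using assms B_ok unfolding D0_def by blast
  qed auto
  then show ?thesis unfolding B_def by simp
qed

lemma V_cont: assumes "r \<in> D0" shows "cont_on D0 (V r)"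
proof -
  have "cont_on D0 (\<lambda>s. the (K2_app (tot (B r s)) ((\<lambda>_. (\<lambda>_. nr r)) s)))"
  proof (rule cont_app)
    show "cont_on D0 (\<lambda>s. tot (B r s))" unfolding tot_def
      by (intro cont_lft cont_rgt B_cont assms)
  next
    fix s assume "s \<in> D0"
    then obtain x y where "r \<in> E x x" "s \<in> E y y" using assms unfolding D0_def by blast
    from Gfacts[OF this] show "K2_app (tot (B r s)) ((\<lambda>_. (\<lambda>_. nr r)) s) \<noteq> None" by fastforce
  qed auto
  then show ?thesis unfolding V_def by simp
qed

lemma KEY: assumes "r \<in> D0" shows "\<exists>k. \<forall>s\<in>D0. agree k s r \<longrightarrow> V r s 0 = 1"
proof -
  obtain x where x: "r \<in> E x x" using assms unfolding D0_def by blast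
  obtain k where "\<forall>s\<in>D0. agree k s r \<longrightarrow> V r s 0 = V r r 0"
    using V_cont[OF assms] assms unfolding cont_on_def by blast
  then show ?thesis using V1[OF x] by auto
qed

definition kr where "kr r = (SOME k. \<forall>s\<in>D0. agree k s r \<longrightarrow> V r s 0 = 1)"

lemma kr: "r \<in> D0 \<Longrightarrow> s \<in> D0 \<Longrightarrow> agree (kr r) s r \<Longrightarrow> V r s 0 = 1"
  unfolding kr_def using someI_ex[OF KEY] by blast

lemma Wgood:
  assumes r: "r \<in> E x x" and s: "s \<in> E y y" and ag: "agree (kr r) s r"
  shows "K2_app (i2 (B r s)) (rpair (\<lambda>_. nr r) (rgt (V r s))) = Some (W r s) \<and> W r s \<in> E x y"
proof -
  obtain G where
    T: "\<forall>n. \<exists>m g. K2_app (tot (B r s)) (\<lambda>_. n) = Some (rpair (\<lambda>_. m) g) \<and> g \<in> G (n, m)"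
    and I2: "\<forall>n g. g \<in> G (n, 1) \<longrightarrow> (\<exists>w\<in>E x y. K2_app (i2 (B r s)) (rpair (\<lambda>_. n) g) = Some w)"
    using Gfacts[OF r s] by blast
  obtain m g where mg: "K2_app (tot (B r s)) (\<lambda>_. nr r) = Some (rpair (\<lambda>_. m) g)" "g \<in> G (nr r, m)"
    using T by blast
  have "r \<in> D0" "s \<in> D0" using r s unfolding D0_def by auto
  then have "V r s 0 = 1" using kr ag by blast
  then have m1: "m = 1" using mg(1) unfolding V_def by simp
  have "rgt (V r s) = g" using mg(1) unfolding V_def by simp
  then obtain w where "w \<in> E x y" "K2_app (i2 (B r s)) (rpair (\<lambda>_. nr r) (rgt (V r s))) = Some w"
    using I2 mg(2) m1 by blast
  then show ?thesis unfolding W_def by simp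
qed

lemma W_cont: assumes "r \<in> D0" shows "cont_on {s\<in>D0. agree (kr r) s r} (W r)"
proof -
  let ?S = "{s\<in>D0. agree (kr r) s r}"
  have "cont_on ?S (\<lambda>s. the (K2_app (i2 (B r s)) (rpair (\<lambda>_. nr r) (rgt (V r s)))))"
  proof (rule cont_app)
    show "cont_on ?S (\<lambda>s. i2 (B r s))" unfolding i2_def
      by (rule cont_subset[of D0]) (intro cont_rgt B_cont assms, auto)
    show "cont_on ?S (\<lambda>s. rpair (\<lambda>_. nr r) (rgt (V r s)))"
      by (rule cont_subset[of D0]) (intro cont_rpair cont_const cont_rgt V_cont assms, auto)
  next
    fix s assume "s \<in> ?S"
    then obtain x y where "r \<in> E x x" "s \<in> E y y" "agree (kr r) s r" using assms unfolding D0_def by blast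
    from Wgood[OF this] show "K2_app (i2 (B r s)) (rpair (\<lambda>_. nr r) (rgt (V r s))) \<noteq> None" by simp
  qed
  then show ?thesis unfolding W_def by simp
qed

end



context Setting
begin

definition sy where "sy = (SOME f. \<forall>x y. f \<in> r_imp (E x y) (E y x))"
definition tr where "tr = (SOME f. \<forall>x y z. f \<in> r_imp (r_conj (E x y) (E y z)) (E x z))"
definition Sy where "Sy w = the (K2_app sy w)"
definition Tr where "Tr w = the (K2_app tr w)"

lemma sy_ex: "\<exists>f. \<forall>x y. f \<in> r_imp (E x y) (E y x)"
proof -
  obtain f where "f \<in> r_all (\<lambda>x. r_all (\<lambda>y. r_imp (E x y) (E y x)))"
    using obj unfolding is_object_def by blast
  then show ?thesis unfolding r_all_def by blast
qed
lemma tr_ex: "\<exists>f. \<forall>x y z. f \<in> r_imp (r_conj (E x y) (E y z)) (E x z)"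
proof -
  obtain f where "f \<in> r_all (\<lambda>x. r_all (\<lambda>y. r_all (\<lambda>z. r_imp (r_conj (E x y) (E y z)) (E x z))))"
    using obj unfolding is_object_def by blast
  then show ?thesis unfolding r_all_def by blast
qed

lemma Sy: "w \<in> E x y \<Longrightarrow> K2_app sy w = Some (Sy w) \<and> Sy w \<in> E y x"
proof -
  assume w: "w \<in> E x y"
  have "sy \<in> r_imp (E x y) (E y x)" using someI_ex[OF sy_ex] unfolding sy_def by blast
  from impD[OF this w] obtain b where "K2_app sy w = Some b" "b \<in> E y x" by blast
  then show ?thesis unfolding Sy_def by simp
qed

lemma Tr: "w \<in> E x y \<Longrightarrow> w' \<in> E y z \<Longrightarrow> K2_app tr (rpair w w') = Some (Tr (rpair w w')) \<and> Tr (rpair w w') \<in> E x z"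
proof -
  assume w: "w \<in> E x y" "w' \<in> E y z"
  have t: "tr \<in> r_imp (r_conj (E x y) (E y z)) (E x z)" using someI_ex[OF tr_ex] unfolding tr_def by blast
  have p: "rpair w w' \<in> r_conj (E x y) (E y z)" using w by (simp add: mem_conj)
  from impD[OF t p] obtain b where "K2_app tr (rpair w w') = Some b" "b \<in> E x z" by blast
  then show ?thesis unfolding Tr_def by simp
qed

definition P where "P r = map r [0..<kr r]"
definition GL where "GL = P ` D0"
definition rho where "rho l = (SOME r. r \<in> D0 \<and> P r = l)"
definition xl where "xl l = (SOME x. rho l \<in> E x x)"

lemma rho: "l \<in> GL \<Longrightarrow> rho l \<in> D0 \<and> P (rho l) = l"
proof -
  assume "l \<in> GL"
  then have ex: "\<exists>r. r \<in> D0 \<and> P r = l" unfolding GL_def by blast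
  show ?thesis unfolding rho_def by (rule someI_ex[OF ex])
qed

lemma rho_E: "l \<in> GL \<Longrightarrow> rho l \<in> E (xl l) (xl l)"
proof -
  assume "l \<in> GL"
  then have ex: "\<exists>x. rho l \<in> E x x" using rho[of l] unfolding D0_def by blast
  show ?thesis unfolding xl_def by (rule someI_ex[OF ex])
qed

definition len where "len s = (LEAST j. map s [0..<j] \<in> GL)"
definition lab where "lab s = map s [0..<len s]"

lemma len_ex: "s \<in> D0 \<Longrightarrow> map s [0..<len s] \<in> GL"
proof -
  assume "s \<in> D0"
  then have "P s \<in> GL" unfolding GL_def by (rule imageI)
  then have "map s [0..<kr s] \<in> GL" unfolding P_def .
  then show ?thesis unfolding len_def by (rule LeastI)
qed

lemma lab_ok: assumes "s \<in> D0" shows "lab s \<in> GL \<and> agree (kr (rho (lab s))) s (rho (lab s))"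
proof -
  have l: "lab s \<in> GL" using len_ex[OF assms] unfolding lab_def .
  have "P (rho (lab s)) = lab s" using rho[OF l] by simp
  then have m: "map (rho (lab s)) [0..<kr (rho (lab s))] = map s [0..<len s]" unfolding P_def lab_def .
  then have "length (map (rho (lab s)) [0..<kr (rho (lab s))]) = length (map s [0..<len s])" by (rule arg_cong)
  then have k: "kr (rho (lab s)) = len s" by simp
  have "agree (kr (rho (lab s))) (rho (lab s)) s" unfolding agree_map using m k by (simp only:)
  then show ?thesis using l agree_sym by blast
qed

lemma lab_lc: "lc_on D0 lab"
  unfolding lc_on_def
proof (intro ballI)
  fix s assume s: "s \<in> D0"
  show "\<exists>k. \<forall>s'\<in>D0. agree k s' s \<longrightarrow> lab s' = lab s"
  proof (intro exI[of _ "len s"] ballI impI)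
  fix s' assume s': "s' \<in> D0" and ag: "agree (len s) s' s"
  have eq: "map s' [0..<j] = map s [0..<j]" if "j \<le> len s" for j
    using agree_mono[OF ag that] agree_map by blast
  have L: "(LEAST j. map s' [0..<j] \<in> GL) = len s"
  proof (rule Least_equality)
    show "map s' [0..<len s] \<in> GL" using eq[OF order_refl] len_ex[OF s] by (simp only:)
    show "len s \<le> j" if "map s' [0..<j] \<in> GL" for j
    proof (rule ccontr)
      assume "\<not> len s \<le> j"
      then have "j \<le> len s" by simp
      then have "map s [0..<j] \<in> GL" using that eq[of j] by (simp only:)
      then have "len s \<le> j" unfolding len_def by (rule Least_le)
      then show False using \<open>\<not> len s \<le> j\<close> by simp
    qed
  qed
  then have "len s' = len s" by (simp only: len_def[of s'])
  then show "lab s' = lab s" unfolding lab_def using eq[OF order_refl] by (simp only:)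
  qed
qed

end



lemma lft0: "lft c 0 = c 0" by (simp add: lft_def)

lemma tag_ne: "rpair (\<lambda>_. 0) r \<noteq> rpair (\<lambda>_. 1) r'"
proof
  assume "rpair (\<lambda>_. 0) r = rpair (\<lambda>_. 1) r'"
  then have "rpair (\<lambda>_. 0::nat) r 0 = rpair (\<lambda>_. 1) r' 0" by simp
  then show False by simp
qed

context Setting
begin

abbreviation EB where "EB \<equiv> sum_one_eq E"
abbreviation PE where "PE \<equiv> prod_eq nno_eq (sum_one_eq E)"

definition Fr :: "nat \<times> 'a option \<Rightarrow> baire set" where
  "Fr z = (case z of (n, Some x) \<Rightarrow>
      {rpair (\<lambda>_. n) (rpair (rpair (\<lambda>_. 0) r) w) | r w l. r \<in> E x x \<and> l \<in> GL \<and> n = Suc (to_nat l) \<and> w \<in> E (xl l) x}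
    | (n, None) \<Rightarrow> {rpair (\<lambda>_. n) (rpair (rpair (\<lambda>_. 1) r) w) | r w. \<forall>l\<in>GL. n \<noteq> Suc (to_nat l)})"

lemma Fr_SomeE: "c \<in> Fr (n, Some x) \<Longrightarrow> \<exists>r w l. c = rpair (\<lambda>_. n) (rpair (rpair (\<lambda>_. 0) r) w) \<and> r \<in> E x x \<and> l \<in> GL \<and> n = Suc (to_nat l) \<and> w \<in> E (xl l) x"
  unfolding Fr_def by simp

lemma Fr_SomeI: "r \<in> E x x \<Longrightarrow> l \<in> GL \<Longrightarrow> w \<in> E (xl l) x \<Longrightarrow> n = Suc (to_nat l) \<Longrightarrow> rpair (\<lambda>_. n) (rpair (rpair (\<lambda>_. 0) r) w) \<in> Fr (n, Some x)"
  unfolding Fr_def by auto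

lemma Fr_NoneE: "c \<in> Fr (n, None) \<Longrightarrow> \<exists>r w. c = rpair (\<lambda>_. n) (rpair (rpair (\<lambda>_. 1) r) w) \<and> (\<forall>l\<in>GL. n \<noteq> Suc (to_nat l))"
  unfolding Fr_def by simp

lemma Fr_NoneI: "\<forall>l\<in>GL. n \<noteq> Suc (to_nat l) \<Longrightarrow> rpair (\<lambda>_. n) (rpair (rpair (\<lambda>_. 1) r) w) \<in> Fr (n, None)"
  unfolding Fr_def by auto

lemma EB_SS: "e \<in> EB (Some x) (Some y) \<longleftrightarrow> lft e = (\<lambda>_. 0) \<and> rgt e \<in> E x y"
proof
  assume "e \<in> EB (Some x) (Some y)" then show "lft e = (\<lambda>_. 0) \<and> rgt e \<in> E x y" by auto
next
  assume h: "lft e = (\<lambda>_. 0) \<and> rgt e \<in> E x y"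
  have "e = rpair (\<lambda>_. 0) (rgt e)" using h rpair_lr[of e] by simp
  then show "e \<in> EB (Some x) (Some y)" using h by auto
qed

lemma EB_NN: "e \<in> EB None None \<longleftrightarrow> lft e = (\<lambda>_. 1)"
proof
  assume "e \<in> EB None None" then show "lft e = (\<lambda>_. 1)" by auto
next
  assume h: "lft e = (\<lambda>_. 1)"
  have "e = rpair (\<lambda>_. 1) (rgt e)" using h rpair_lr[of e] by simp
  then show "e \<in> EB None None" by auto
qed

lemma EB_SN[simp]: "EB (Some x) None = {}" and EB_NS[simp]: "EB None (Some x) = {}" by auto

lemma mem_PE: "c \<in> PE (n, b) (n', b') \<longleftrightarrow> lft c = (\<lambda>_. n) \<and> n = n' \<and> rgt c \<in> EB b b'"
  unfolding prod_eq_def mem_conj by auto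

definition stmap where "stmap c = rpair (lft c) (lft (rgt c))"

lemma st_ok: assumes "c \<in> Fr z" shows "stmap c \<in> PE z z"
proof -
  obtain n b where z: "z = (n, b)" by (cases z)
  show ?thesis
  proof (cases b)
    case None
    then obtain r w where "c = rpair (\<lambda>_. n) (rpair (rpair (\<lambda>_. 1) r) w)" using Fr_NoneE assms z by blast
    then show ?thesis unfolding z None stmap_def mem_PE EB_NN by simp
  next
    case (Some x)
    then obtain r w l where "c = rpair (\<lambda>_. n) (rpair (rpair (\<lambda>_. 0) r) w)" "r \<in> E x x" using Fr_SomeE assms z by blast
    then show ?thesis unfolding z Some stmap_def mem_PE EB_SS by simp
  qed
qed

definition tagc where "tagc c = lft (rgt (lft c)) 0"

definition exmap where "exmap c = (if tagc c = 0 then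
    rpair (lft (lft c)) (rpair (rpair (\<lambda>_. 0) (Tr (rpair (Sy (rgt (rgt (rgt c)))) (rgt (rgt (rgt c))))))
      (Tr (rpair (rgt (rgt (lft c))) (rgt (rgt (rgt c)))))) else lft c)"

lemma ext_facts:
  assumes c: "c \<in> r_conj (Fr z) (PE z z')" and t: "tagc c = 0"
  shows "\<exists>n x x' l. z = (n, Some x) \<and> z' = (n, Some x') \<and> l \<in> GL \<and> n = Suc (to_nat l) \<and>
     rgt (rgt (rgt c)) \<in> E x x' \<and> rgt (rgt (lft c)) \<in> E (xl l) x \<and> lft (lft c) = (\<lambda>_. n)"
proof -
  obtain n b where z: "z = (n, b)" by (cases z)
  obtain n' b' where z': "z' = (n', b')" by (cases z')
  have f: "lft c \<in> Fr (n, b)" and p: "rgt c \<in> PE (n, b) (n', b')" using c z z' unfolding mem_conj by auto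
  from p have nn: "n' = n" and e: "rgt (rgt c) \<in> EB b b'" unfolding mem_PE by auto
  show ?thesis
  proof (cases b)
    case None
    then obtain r w where "lft c = rpair (\<lambda>_. n) (rpair (rpair (\<lambda>_. 1) r) w)" using Fr_NoneE f by blast
    then have "tagc c = 1" unfolding tagc_def by simp
    then show ?thesis using t by simp
  next
    case (Some x)
    then obtain r w l where rw: "lft c = rpair (\<lambda>_. n) (rpair (rpair (\<lambda>_. 0) r) w)" "r \<in> E x x" "l \<in> GL"
       "n = Suc (to_nat l)" "w \<in> E (xl l) x"
      using Fr_SomeE f by blast
    obtain x' where b': "b' = Some x'" using e Some by (cases b') auto
    have "rgt (rgt (rgt c)) \<in> E x x'" using e Some b' EB_SS by blast
    then show ?thesis using rw z z' nn Some b' by auto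
  qed
qed

lemma ext_ok: assumes c: "c \<in> r_conj (Fr z) (PE z z')" shows "exmap c \<in> Fr z'"
proof (cases "tagc c = 0")
  case True
  obtain n x x' l where h: "z = (n, Some x)" "z' = (n, Some x')" "l \<in> GL" "n = Suc (to_nat l)"
     "rgt (rgt (rgt c)) \<in> E x x'" "rgt (rgt (lft c)) \<in> E (xl l) x" "lft (lft c) = (\<lambda>_. n)"
    using ext_facts[OF c True] by blast
  let ?wz = "rgt (rgt (rgt c))" and ?w = "rgt (rgt (lft c))"
  have s: "Sy ?wz \<in> E x' x" using Sy[OF h(5)] by (rule conjunct2)
  have r': "Tr (rpair (Sy ?wz) ?wz) \<in> E x' x'" using Tr[OF s h(5)] by (rule conjunct2)
  have w': "Tr (rpair ?w ?wz) \<in> E (xl l) x'" using Tr[OF h(6) h(5)] by (rule conjunct2)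
  show ?thesis unfolding exmap_def using True h(2,3,4,7) Fr_SomeI[OF r' h(3) w' h(4)] by simp
next
  case False
  obtain n b where z: "z = (n, b)" by (cases z)
  obtain n' b' where z': "z' = (n', b')" by (cases z')
  have f: "lft c \<in> Fr (n, b)" and p: "rgt c \<in> PE (n, b) (n', b')" using c z z' unfolding mem_conj by auto
  from p have nn: "n' = n" and e: "rgt (rgt c) \<in> EB b b'" unfolding mem_PE by auto
  have "b = None"
  proof (cases b)
    case (Some x)
    then obtain r w l where "lft c = rpair (\<lambda>_. n) (rpair (rpair (\<lambda>_. 0) r) w)" using Fr_SomeE f by blast
    then have "tagc c = 0" unfolding tagc_def by simp
    then show ?thesis using False by simp
  qed simp
  moreover then have "b' = None" using e by (cases b') auto
  ultimately show ?thesis unfolding exmap_def using False f z z' nn by simp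
qed

definition umap where "umap c = (if tagc c = 0 then
    rpair (\<lambda>_. 0) (Tr (rpair (Sy (rgt (rgt (lft c)))) (rgt (rgt (rgt c))))) else rpair (\<lambda>_. 1) (\<lambda>_. 0))"

lemma uq_facts:
  assumes c: "c \<in> r_conj (Fr (n, b)) (Fr (n, b'))"
  shows "(tagc c = 0 \<and> (\<exists>x x' l. b = Some x \<and> b' = Some x' \<and> rgt (rgt (lft c)) \<in> E (xl l) x \<and> rgt (rgt (rgt c)) \<in> E (xl l) x'))
      \<or> (tagc c \<noteq> 0 \<and> b = None \<and> b' = None)"
proof -
  have f: "lft c \<in> Fr (n, b)" and f': "rgt c \<in> Fr (n, b')" using c unfolding mem_conj by auto
  show ?thesis
  proof (cases b)
    case None
    obtain r w where rw: "lft c = rpair (\<lambda>_. n) (rpair (rpair (\<lambda>_. 1) r) w)" "\<forall>l\<in>GL. n \<noteq> Suc (to_nat l)"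
      using Fr_NoneE f None by blast
    have "b' = None"
    proof (cases b')
      case (Some x')
      then obtain l where "l \<in> GL" "n = Suc (to_nat l)" using Fr_SomeE f' by blast
      then show ?thesis using rw(2) by blast
    qed simp
    moreover have "tagc c \<noteq> 0" using rw unfolding tagc_def by simp
    ultimately show ?thesis using None by simp
  next
    case (Some x)
    obtain r w l where rw: "lft c = rpair (\<lambda>_. n) (rpair (rpair (\<lambda>_. 0) r) w)" "l \<in> GL" "n = Suc (to_nat l)" "w \<in> E (xl l) x"
      using Fr_SomeE f Some by blast
    obtain x' where b': "b' = Some x'"
    proof (cases b')
      case None
      then have "\<forall>l\<in>GL. n \<noteq> Suc (to_nat l)" using Fr_NoneE f' by blast
      then show ?thesis using rw by blast
    qed
    obtain r' w' l' where rw': "rgt c = rpair (\<lambda>_. n) (rpair (rpair (\<lambda>_. 0) r') w')" "l' \<in> GL" "n = Suc (to_nat l')" "w' \<in> E (xl l') x'"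
      using Fr_SomeE f' b' by blast
    have "l' = l" using rw(3) rw'(3) by simp
    then have "tagc c = 0 \<and> rgt (rgt (lft c)) \<in> E (xl l) x \<and> rgt (rgt (rgt c)) \<in> E (xl l) x'"
      using rw rw' unfolding tagc_def by simp
    then show ?thesis using Some b' by blast
  qed
qed

lemma uq_ok: assumes c: "c \<in> r_conj (Fr (n, b)) (Fr (n, b'))" shows "umap c \<in> EB b b'"
  using uq_facts[OF c]
proof
  assume "tagc c = 0 \<and> (\<exists>x x' l. b = Some x \<and> b' = Some x' \<and> rgt (rgt (lft c)) \<in> E (xl l) x \<and> rgt (rgt (rgt c)) \<in> E (xl l) x')"
  then obtain x x' l where h: "tagc c = 0" "b = Some x" "b' = Some x'" "rgt (rgt (lft c)) \<in> E (xl l) x" "rgt (rgt (rgt c)) \<in> E (xl l) x'"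
    by blast
  have "Sy (rgt (rgt (lft c))) \<in> E x (xl l)" using Sy[OF h(4)] by (rule conjunct2)
  from Tr[OF this h(5)] have "Tr (rpair (Sy (rgt (rgt (lft c)))) (rgt (rgt (rgt c)))) \<in> E x x'" by (rule conjunct2)
  then show ?thesis unfolding umap_def using h EB_SS by simp
next
  assume "tagc c \<noteq> 0 \<and> b = None \<and> b' = None"
  then show ?thesis unfolding umap_def EB_NN by simp
qed

definition tmap where "tmap n = (if \<exists>l\<in>GL. n = Suc (to_nat l) then
   (let r = rho (SOME l. l \<in> GL \<and> n = Suc (to_nat l)) in rpair (rpair (\<lambda>_. 0) r) (rpair (\<lambda>_. n) (rpair (rpair (\<lambda>_. 0) r) r)))
  else rpair (rpair (\<lambda>_. 1) (\<lambda>_. 0)) (rpair (\<lambda>_. n) (rpair (rpair (\<lambda>_. 1) (\<lambda>_. 0)) (\<lambda>_. 0))))"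

lemma tot_ok: "tmap n \<in> ex_in EB (\<lambda>b. Fr (n, b))"
proof (cases "\<exists>l\<in>GL. n = Suc (to_nat l)")
  case True
  define l where "l = (SOME l. l \<in> GL \<and> n = Suc (to_nat l))"
  have ex: "\<exists>l. l \<in> GL \<and> n = Suc (to_nat l)" using True by blast
  have l: "l \<in> GL \<and> n = Suc (to_nat l)" unfolding l_def by (rule someI_ex[OF ex])
  have r: "rho l \<in> E (xl l) (xl l)" using rho_E l by blast
  have t: "tmap n = rpair (rpair (\<lambda>_. 0) (rho l)) (rpair (\<lambda>_. n) (rpair (rpair (\<lambda>_. 0) (rho l)) (rho l)))"
    unfolding tmap_def l_def[symmetric] using True by (simp add: Let_def)
  have "lft (tmap n) \<in> EB (Some (xl l)) (Some (xl l))" using t r EB_SS by simp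
  moreover have "rgt (tmap n) \<in> Fr (n, Some (xl l))" using t Fr_SomeI[OF r _ r] l by simp
  ultimately show ?thesis unfolding mem_ex_in by blast
next
  case False
  have "lft (tmap n) \<in> EB None None" unfolding tmap_def using False EB_NN by simp
  moreover have "rgt (tmap n) \<in> Fr (n, None)" unfolding tmap_def using False Fr_NoneI by simp
  ultimately show ?thesis unfolding mem_ex_in by blast
qed

definition smap where "smap e = (if e 0 = 0 then
    rpair (\<lambda>_. Suc (to_nat (lab (rgt e)))) (rpair (\<lambda>_. Suc (to_nat (lab (rgt e)))) (rpair e (W (rho (lab (rgt e))) (rgt e))))
  else rpair (\<lambda>_. 0) (rpair (\<lambda>_. 0) (rpair e e)))"

lemma surj_ok: assumes e: "e \<in> EB b b" shows "smap e \<in> ex_in nno_eq (\<lambda>a. Fr (a, b))"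
proof (cases b)
  case None
  have le: "lft e = (\<lambda>_. 1)" using e None EB_NN by blast
  then have "e 0 = 1" using lft0[of e] by simp
  then have s: "smap e = rpair (\<lambda>_. 0) (rpair (\<lambda>_. 0) (rpair e e))" unfolding smap_def by simp
  have "e = rpair (\<lambda>_. 1) (rgt e)" using le rpair_lr[of e] by simp
  then have "rpair (\<lambda>_. 0) (rpair e e) \<in> Fr (0, None)" using Fr_NoneI[of 0 "rgt e" e] by simp
  then show ?thesis unfolding mem_ex_in s None by auto
next
  case (Some x)
  have le: "lft e = (\<lambda>_. 0)" and r: "rgt e \<in> E x x" using e Some EB_SS by auto
  then have "e 0 = 0" using lft0[of e] by simp
  define l where "l = lab (rgt e)"
  have D: "rgt e \<in> D0" using r unfolding D0_def by blast
  have l: "l \<in> GL" "agree (kr (rho l)) (rgt e) (rho l)" using lab_ok[OF D] unfolding l_def by auto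
  have W: "W (rho l) (rgt e) \<in> E (xl l) x" using Wgood[OF rho_E[OF l(1)] r l(2)] by (rule conjunct2)
  have s: "smap e = rpair (\<lambda>_. Suc (to_nat l)) (rpair (\<lambda>_. Suc (to_nat l)) (rpair e (W (rho l) (rgt e))))"
    unfolding smap_def l_def using \<open>e 0 = 0\<close> by simp
  have "e = rpair (\<lambda>_. 0) (rgt e)" using le rpair_lr[of e] by simp
  then have "rpair (\<lambda>_. Suc (to_nat l)) (rpair e (W (rho l) (rgt e))) \<in> Fr (Suc (to_nat l), Some x)"
    using Fr_SomeI[OF r l(1) W refl] by simp
  then show ?thesis unfolding mem_ex_in s Some by auto
qed

end



lemma cont_app1:
  assumes "cont_on D \<psi>" "\<And>a. a \<in> D \<Longrightarrow> K2_app f (\<psi> a) \<noteq> None"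
  shows "cont_on D (\<lambda>a. the (K2_app f (\<psi> a)))"
  using cont_app[OF cont_const[of D f] assms(1)] assms(2) by simp

lemma lc_tag: "lc_on D (\<lambda>c. lft (rgt (lft c)) 0 = 0)"
proof -
  have "cont_on D (\<lambda>c. lft (rgt (lft c)))" by (intro cont_lft cont_rgt cont_id)
  then have "lc_on D (\<lambda>c. lft (rgt (lft c)) 0)" by (rule lc_entry)
  then show ?thesis by (rule lc_comp)
qed

lemma lc_e0: "lc_on D (\<lambda>e. e 0 = 0)"
  unfolding lc_on_def by (intro ballI exI[of _ 1]) (auto simp: agree_def)

context Setting
begin

definition DE where "DE = {c. \<exists>z z'. c \<in> r_conj (Fr z) (PE z z')}"
definition DU where "DU = {c. \<exists>n b b'. c \<in> r_conj (Fr (n, b)) (Fr (n, b'))}"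
definition DS where "DS = {e. \<exists>b. e \<in> EB b b}"

lemma ext_defd:
  assumes "c \<in> DE" "tagc c = 0"
  shows "K2_app sy (rgt (rgt (rgt c))) \<noteq> None \<and>
    K2_app tr (rpair (Sy (rgt (rgt (rgt c)))) (rgt (rgt (rgt c)))) \<noteq> None \<and>
    K2_app tr (rpair (rgt (rgt (lft c))) (rgt (rgt (rgt c)))) \<noteq> None"
proof -
  obtain z z' where c: "c \<in> r_conj (Fr z) (PE z z')" using assms(1) unfolding DE_def by blast
  obtain n x x' l where h: "rgt (rgt (rgt c)) \<in> E x x'" "rgt (rgt (lft c)) \<in> E (xl l) x"
    using ext_facts[OF c assms(2)] by blast
  have s: "Sy (rgt (rgt (rgt c))) \<in> E x' x" using Sy[OF h(1)] by (rule conjunct2)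
  show ?thesis using Sy[OF h(1)] Tr[OF s h(1)] Tr[OF h(2) h(1)] by simp
qed

lemma cont_ex: "cont_on DE exmap"
proof -
  let ?D1 = "{c \<in> DE. tagc c = 0}"
  have c0: "cont_on ?D1 (\<lambda>c. rgt (rgt (rgt c)))" by (intro cont_rgt cont_id)
  have c1: "cont_on ?D1 (\<lambda>c. Sy (rgt (rgt (rgt c))))" unfolding Sy_def
    by (rule cont_app1[OF c0]) (use ext_defd in blast)
  have c2: "cont_on ?D1 (\<lambda>c. Tr (rpair (Sy (rgt (rgt (rgt c)))) (rgt (rgt (rgt c)))))" unfolding Tr_def
    by (rule cont_app1[OF cont_rpair[OF c1 c0]]) (use ext_defd in blast)
  have c4: "cont_on ?D1 (\<lambda>c. rgt (rgt (lft c)))" by (intro cont_rgt cont_lft cont_id)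
  have c3: "cont_on ?D1 (\<lambda>c. Tr (rpair (rgt (rgt (lft c))) (rgt (rgt (rgt c)))))" unfolding Tr_def
    by (rule cont_app1[OF cont_rpair[OF c4 c0]]) (use ext_defd in blast)
  have ct: "cont_on ?D1 (\<lambda>c. rpair (lft (lft c)) (rpair (rpair (\<lambda>_. 0) (Tr (rpair (Sy (rgt (rgt (rgt c)))) (rgt (rgt (rgt c))))))
      (Tr (rpair (rgt (rgt (lft c))) (rgt (rgt (rgt c)))))))"
    by (rule cont_rpair[OF cont_lft[OF cont_lft[OF cont_id]] cont_rpair[OF cont_rpair[OF cont_const c2] c3]])
  have cf: "cont_on {c \<in> DE. \<not> tagc c = 0} (\<lambda>c. lft c)" by (intro cont_lft cont_id)
  have lc: "lc_on DE (\<lambda>c. tagc c = 0)" unfolding tagc_def by (rule lc_tag)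
  have "cont_on DE (\<lambda>c. if tagc c = 0 then
    rpair (lft (lft c)) (rpair (rpair (\<lambda>_. 0) (Tr (rpair (Sy (rgt (rgt (rgt c)))) (rgt (rgt (rgt c))))))
      (Tr (rpair (rgt (rgt (lft c))) (rgt (rgt (rgt c)))))) else lft c)"
    by (rule cont_if[OF lc ct cf])
  then show ?thesis unfolding exmap_def[abs_def] .
qed

lemma uq_defd:
  assumes "c \<in> DU" "tagc c = 0"
  shows "K2_app sy (rgt (rgt (lft c))) \<noteq> None \<and>
    K2_app tr (rpair (Sy (rgt (rgt (lft c)))) (rgt (rgt (rgt c)))) \<noteq> None"
proof -
  obtain n b b' where c: "c \<in> r_conj (Fr (n, b)) (Fr (n, b'))" using assms(1) unfolding DU_def by blast
  obtain x x' l where h: "rgt (rgt (lft c)) \<in> E (xl l) x" "rgt (rgt (rgt c)) \<in> E (xl l) x'"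
    using uq_facts[OF c] assms(2) by blast
  have s: "Sy (rgt (rgt (lft c))) \<in> E x (xl l)" using Sy[OF h(1)] by (rule conjunct2)
  show ?thesis using Sy[OF h(1)] Tr[OF s h(2)] by simp
qed

lemma cont_uq: "cont_on DU umap"
proof -
  let ?D1 = "{c \<in> DU. tagc c = 0}"
  have c0: "cont_on ?D1 (\<lambda>c. rgt (rgt (lft c)))" by (intro cont_rgt cont_lft cont_id)
  have c1: "cont_on ?D1 (\<lambda>c. Sy (rgt (rgt (lft c))))" unfolding Sy_def
    by (rule cont_app1[OF c0]) (use uq_defd in blast)
  have c4: "cont_on ?D1 (\<lambda>c. rgt (rgt (rgt c)))" by (intro cont_rgt cont_id)
  have c2: "cont_on ?D1 (\<lambda>c. Tr (rpair (Sy (rgt (rgt (lft c)))) (rgt (rgt (rgt c)))))" unfolding Tr_def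
    by (rule cont_app1[OF cont_rpair[OF c1 c4]]) (use uq_defd in blast)
  have ct: "cont_on ?D1 (\<lambda>c. rpair (\<lambda>_. 0) (Tr (rpair (Sy (rgt (rgt (lft c)))) (rgt (rgt (rgt c))))))"
    by (rule cont_rpair[OF cont_const c2])
  have cf: "cont_on {c \<in> DU. \<not> tagc c = 0} (\<lambda>c. rpair (\<lambda>_. 1) (\<lambda>_. 0))" by (rule cont_const)
  have lc: "lc_on DU (\<lambda>c. tagc c = 0)" unfolding tagc_def by (rule lc_tag)
  have "cont_on DU (\<lambda>c. if tagc c = 0 then
    rpair (\<lambda>_. 0) (Tr (rpair (Sy (rgt (rgt (lft c)))) (rgt (rgt (rgt c))))) else rpair (\<lambda>_. 1) (\<lambda>_. 0))"
    by (rule cont_if[OF lc ct cf])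
  then show ?thesis unfolding umap_def[abs_def] .
qed

lemma DS_D0: "e \<in> DS \<Longrightarrow> e 0 = 0 \<Longrightarrow> rgt e \<in> D0"
proof -
  assume e: "e \<in> DS" "e 0 = 0"
  then obtain b where b: "e \<in> EB b b" unfolding DS_def by blast
  show ?thesis
  proof (cases b)
    case None
    then have "lft e = (\<lambda>_. 1)" using b EB_NN by blast
    then have "e 0 = 1" using lft0[of e] by simp
    then show ?thesis using e by simp
  next
    case (Some x)
    then have "rgt e \<in> E x x" using b EB_SS by blast
    then show ?thesis unfolding D0_def by blast
  qed
qed

lemma cont_s: "cont_on DS smap"
proof -
  let ?D1 = "{e \<in> DS. e 0 = 0}"
  let ?T = "\<lambda>e. rpair (\<lambda>_. Suc (to_nat (lab (rgt e)))) (rpair (\<lambda>_. Suc (to_nat (lab (rgt e)))) (rpair e (W (rho (lab (rgt e))) (rgt e))))"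
  have lcl: "lc_on ?D1 (\<lambda>e. lab (rgt e))"
    by (rule lc_comp_cont[OF lab_lc cont_rgt[OF cont_id]]) (use DS_D0 in blast)
  have ct: "cont_on ?D1 ?T"
  proof (rule cont_local)
    fix e assume e: "e \<in> ?D1"
    obtain k where k: "\<forall>e'\<in>?D1. agree k e' e \<longrightarrow> lab (rgt e') = lab (rgt e)"
      using lcl e unfolding lc_on_def by blast
    define l where "l = lab (rgt e)"
    let ?N = "{e' \<in> ?D1. agree k e' e}"
    have le: "l \<in> GL" unfolding l_def using lab_ok[OF DS_D0] e by blast
    have rl: "rho l \<in> D0" using rho[OF le] by blast
    have im: "rgt e' \<in> {s \<in> D0. agree (kr (rho l)) s (rho l)}" if "e' \<in> ?N" for e'
    proof -
      have "rgt e' \<in> D0" using that DS_D0 by blast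
      moreover have "lab (rgt e') = l" using that k l_def by blast
      ultimately show ?thesis using lab_ok by fastforce
    qed
    have cw: "cont_on ?N (\<lambda>e'. W (rho l) (rgt e'))"
      by (rule cont_comp[OF W_cont[OF rl] cont_rgt[OF cont_id] im])
    have cN: "cont_on ?N (\<lambda>e'. rpair (\<lambda>_. Suc (to_nat l)) (rpair (\<lambda>_. Suc (to_nat l)) (rpair e' (W (rho l) (rgt e')))))"
      by (rule cont_rpair[OF cont_const cont_rpair[OF cont_const cont_rpair[OF cont_id cw]]])
    have eq: "?T e' = rpair (\<lambda>_. Suc (to_nat l)) (rpair (\<lambda>_. Suc (to_nat l)) (rpair e' (W (rho l) (rgt e'))))"
      if "e' \<in> ?N" for e'
    proof -
      have "lab (rgt e') = l" using that k l_def by blast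
      then show ?thesis by simp
    qed
    have "cont_on ?N ?T" by (rule cont_cong[OF eq[symmetric] cN])
    then show "\<exists>k. cont_on {e' \<in> ?D1. agree k e' e} ?T" by blast
  qed
  have cf: "cont_on {e \<in> DS. \<not> e 0 = 0} (\<lambda>e. rpair (\<lambda>_. 0) (rpair (\<lambda>_. 0) (rpair e e)))"
    by (intro cont_rpair cont_const cont_id)
  have "cont_on DS (\<lambda>e. if e 0 = 0 then ?T e else rpair (\<lambda>_. 0) (rpair (\<lambda>_. 0) (rpair e e)))"
    by (rule cont_if[OF lc_e0 ct cf])
  then show ?thesis unfolding smap_def[abs_def] .
qed

end



context Setting
begin

definition DN where "DN = range (\<lambda>n::nat. \<lambda>_::nat. n)"

lemma countable_nonempty: "\<exists>q. q \<in> countable_obj E"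
proof -
  define stc where "stc = rep_code UNIV stmap"
  define exc where "exc = rep_code DE exmap"
  define idc where "idc = rep_code UNIV (\<lambda>a. a)"
  define totc where "totc = rep_code DN (\<lambda>a. tmap (a 0))"
  define uqc where "uqc = Kc (Kc (Kc (rep_code DU umap)))"
  define sc where "sc = rep_code DS smap"
  have cst: "cont_on UNIV stmap" unfolding stmap_def[abs_def] by (intro cont_rpair cont_lft cont_rgt cont_id)
  have st: "stc \<in> strict_pred PE Fr"
    unfolding strict_pred_def r_all_def
  proof (intro INT_I UNIV_I)
    fix z show "stc \<in> r_imp (Fr z) (PE z z)" unfolding mem_imp
      using rep_correct[OF cst] st_ok unfolding stc_def by blast
  qed
  have ex: "exc \<in> ext_pred PE Fr"
    unfolding ext_pred_def r_all_def
  proof (intro INT_I UNIV_I)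
    fix z z' show "exc \<in> r_imp (r_conj (Fr z) (PE z z')) (Fr z')" unfolding mem_imp
    proof
      fix c assume c: "c \<in> r_conj (Fr z) (PE z z')"
      then have "c \<in> DE" unfolding DE_def by blast
      then have "K2_app exc c = Some (exmap c)" unfolding exc_def by (rule rep_correct[OF cont_ex])
      then show "\<exists>b\<in>Fr z'. K2_app exc c = Some b" using ext_ok[OF c] by blast
    qed
  qed
  have idr: "K2_app idc a = Some a" for a unfolding idc_def by (rule rep_correct) auto
  have iff: "rpair idc idc \<in> r_all (\<lambda>z. r_iff (Fr z) (Fr z))"
    unfolding r_all_def
  proof (intro INT_I UNIV_I)
    fix z show "rpair idc idc \<in> r_iff (Fr z) (Fr z)" unfolding mem_iff mem_imp using idr by simp
  qed
  have pw: "rpair (rpair stc exc) (rpair idc idc) \<in> pow_eq PE Fr Fr"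
    unfolding pow_eq_def mem_conj using st ex iff by simp
  have tot: "totc \<in> all_in nno_eq (\<lambda>a. ex_in EB (\<lambda>b. Fr (a, b)))"
    unfolding mem_all_in
  proof (intro allI ballI)
    fix n r assume "r \<in> nno_eq n n"
    then have r: "r = (\<lambda>_. n)" by simp
    have "r \<in> DN" unfolding DN_def r by blast
    then have "K2_app totc r = Some (tmap (r 0))" unfolding totc_def by (rule rep_correct[OF cont_discrete[folded DN_def]])
    then show "\<exists>b\<in>ex_in EB (\<lambda>b. Fr (n, b)). K2_app totc r = Some b" using tot_ok[of n] r by simp
  qed
  have u: "rep_code DU umap \<in> r_imp (r_conj (Fr (n, b)) (Fr (n, b'))) (EB b b')" for n b b'
    unfolding mem_imp
  proof
    fix c assume c: "c \<in> r_conj (Fr (n, b)) (Fr (n, b'))"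
    then have "c \<in> DU" unfolding DU_def by blast
    then have "K2_app (rep_code DU umap) c = Some (umap c)" by (rule rep_correct[OF cont_uq])
    then show "\<exists>v\<in>EB b b'. K2_app (rep_code DU umap) c = Some v" using uq_ok[OF c] by blast
  qed
  have uq: "uqc \<in> all_in nno_eq (\<lambda>a. all_in EB (\<lambda>b. all_in EB (\<lambda>b'.
        r_imp (r_conj (Fr (a, b)) (Fr (a, b'))) (EB b b'))))"
    unfolding uqc_def mem_all_in[of "Kc (Kc (Kc (rep_code DU umap)))"]
  proof (intro allI ballI)
    fix n r
    have "Kc (Kc (rep_code DU umap)) \<in> all_in EB (\<lambda>b. all_in EB (\<lambda>b'.
        r_imp (r_conj (Fr (n, b)) (Fr (n, b'))) (EB b b')))"
      unfolding mem_all_in[of "Kc (Kc (rep_code DU umap))"]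
    proof (intro allI ballI)
      fix b e
      have "Kc (rep_code DU umap) \<in> all_in EB (\<lambda>b'. r_imp (r_conj (Fr (n, b)) (Fr (n, b'))) (EB b b'))"
        unfolding mem_all_in[of "Kc (rep_code DU umap)"] using u by simp
      then show "\<exists>v\<in>all_in EB (\<lambda>b'. r_imp (r_conj (Fr (n, b)) (Fr (n, b'))) (EB b b')).
          K2_app (Kc (Kc (rep_code DU umap))) e = Some v" by simp
    qed
    then show "\<exists>v\<in>all_in EB (\<lambda>b. all_in EB (\<lambda>b'. r_imp (r_conj (Fr (n, b)) (Fr (n, b'))) (EB b b'))).
          K2_app (Kc (Kc (Kc (rep_code DU umap)))) r = Some v" by simp
  qed
  have sr: "sc \<in> is_surj_rel nno_eq EB Fr"
    unfolding is_surj_rel_def mem_all_in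
  proof (intro allI ballI)
    fix b e assume e: "e \<in> EB b b"
    then have "e \<in> DS" unfolding DS_def by blast
    then have "K2_app sc e = Some (smap e)" unfolding sc_def by (rule rep_correct[OF cont_s])
    then show "\<exists>v\<in>ex_in nno_eq (\<lambda>a. Fr (a, b)). K2_app sc e = Some v" using surj_ok[OF e] by blast
  qed
  have fr: "rpair totc uqc \<in> is_fun_rel nno_eq EB Fr"
    unfolding is_fun_rel_def mem_conj using tot uq by simp
  have "rpair (rpair (rpair stc exc) (rpair idc idc)) (rpair (rpair totc uqc) sc) \<in> countable_obj E"
    unfolding countable_obj_def mem_ex_in
    by (rule exI[of _ Fr]) (simp add: pw mem_conj fr sr)
  then show ?thesis by blast
qed

end

theorem theorem3p4:
  fixes E :: "'a \<Rightarrow> 'a \<Rightarrow> (nat \<Rightarrow> nat) set"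
  assumes "is_object E"
  shows "valid (r_imp (eq_intrinsically_open E) (countable_obj E))"
proof (cases "eq_intrinsically_open E = {}")
  case True
  then have "(\<lambda>_. 0) \<in> r_imp (eq_intrinsically_open E) (countable_obj E)" unfolding mem_imp by simp
  then show ?thesis unfolding valid_def by blast
next
  case False
  then obtain a0 where a0: "a0 \<in> eq_intrinsically_open E" by blast
  interpret Setting E a0 using assms a0 by unfold_locales
  obtain q where q: "q \<in> countable_obj E" using countable_nonempty by blast
  have "Kc q \<in> r_imp (eq_intrinsically_open E) (countable_obj E)" unfolding mem_imp using q by simp
  then show ?thesis unfolding valid_def by blast
qed



end
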